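(* In the cone setting of the context, for any $h\in\mathcal B_{\mathbb C}$ and all $z\in\mathbb C$ with $|z|<(\sqrt2\|h\|)^{-1}$ we have $e+zh\in\mathcal C_{\mathbb C}$ and \[\delta_{\mathcal C}(e,e+zh)\le\ln\Big(\frac{1+|z|\sqrt2\|h\|}{1-|z|\sqrt2\|h\|}\Big)<\infty.\]
   Context: Cone setting. $V$ is a real topological vector space, $\mathcal S\subset V'$ a set of linear functionals such that $\ell(x)=0$ for all $\ell\in\mathcal S$ implies $x=0$, $C_{\mathbb R}=\{h\in V\setminus\{0\}:\ell(h)\ge0\ \forall\ell\in\mathcal S\}$, and $e\in C_{\mathbb R}$ is such that for every $h\in V$ some $\lambda\ge0$ has $\lambda e-h\in C_{\mathbb R}$. Norm $\|h\|=\inf\{\lambda\ge0:\ell(\lambda e\pm h)\ge0\ \forall\ell\in\mathcal S\}$; $\mathcal B_{\mathbb R}$ the completion of $V$; $\mathcal C_{\mathbb R}=\{h\in\mathcal B_{\mathbb R}\setminus\{0\}:\ell(h)\ge0\ \forall\ell\in\mathcal S\}$; $\mathcal C'_{\mathbb R}=\{\ell\in\mathcal B'_{\mathbb R}:\ell\ge0\text{ on }\mathcal C_{\mathbb R}\}$. $\mathcal S_*$ is the weak-$*$ closure of the convex hull of $\{\lambda\ell:\lambda>0,\ell\in\mathcal S\}$; there exist $m\in\mathcal S_*$, $\kappa\in(0,1)$ with $m(e)=1$ and $m(h)\ge\kappa\|h\|$ on $\mathcal C_{\mathbb R}$. $\mathcal B_{\mathbb C}$ is the complexification (norm $\|x+iy\|=\sup_\theta(\|\Re(e^{i\theta}(x+iy))\|^2+\|\Im(e^{i\theta}(x+iy))\|^2)^{1/2}$),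 real functionals extended complex-linearly. $\mathcal C_{\mathbb C}=\{z(x+iy):z\ne0,x,y\in\mathcal C_{\mathbb R}\}$, $\mathcal C'_{\mathbb C}=\{\ell\in\mathcal B'_{\mathbb C}:\ell(h)\ne0\ \forall h\in\mathcal C_{\mathbb C}\}$. For $h,g\in\mathcal C_{\mathbb C}$, $E(h,g)=\{\ell(h)/\ell(g):\ell\in\mathcal C'_{\mathbb C}\}$ and $\delta_{\mathcal C}(h,g)=\ln\frac{\sup_{z\in E(h,g)}|z|}{\inf_{z\in E(h,g)}|z|}$. *)

theory Defs
  imports "HOL-Analysis.Analysis"
begin

text \<open>The completed real space B_R is modelled as a real Banach space type 'a;
  V is a dense linear subspace of it (so 'a is the completion of V).
  The complexification B_C is modelled as pairs (x,y) standing for x + i y.\<close>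

definition real_cone :: "('a::real_vector \<Rightarrow> real) set \<Rightarrow> 'a set \<Rightarrow> 'a set" where
  "real_cone S W = {h \<in> W. h \<noteq> 0 \<and> (\<forall>l\<in>S. l h \<ge> 0)}"

definition order_unit_norm :: "('a::real_vector \<Rightarrow> real) set \<Rightarrow> 'a \<Rightarrow> 'a \<Rightarrow> real" where
  "order_unit_norm S e h = Inf {lam. lam \<ge> 0 \<and> (\<forall>l\<in>S. l (lam *\<^sub>R e + h) \<ge> 0 \<and> l (lam *\<^sub>R e - h) \<ge> 0)}"

text \<open>Weak-* closure (pointwise convergence on the space) of the convex hull of the
  positive multiples of S, i.e. of the finite positive combinations of elements of S,
  intersected with the continuous dual of B_R.\<close>
definition S_star :: "('a::real_normed_vector \<Rightarrow> real) set \<Rightarrow> ('a \<Rightarrow> real) set" where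
  "S_star S = {m. bounded_linear m \<and>
     (\<forall>F::'a set. \<forall>\<epsilon>>0. finite F \<longrightarrow>
        (\<exists>L c. finite L \<and> L \<noteq> {} \<and> L \<subseteq> S \<and> (\<forall>l\<in>L. c l > (0::real)) \<and>
               (\<forall>x\<in>F. \<bar>(\<Sum>l\<in>L. c l * l x) - m x\<bar> < \<epsilon>)))}"

definition cone_setting ::
  "'a::banach set \<Rightarrow> ('a \<Rightarrow> real) set \<Rightarrow> 'a \<Rightarrow> bool" where
  "cone_setting V S e \<longleftrightarrow>
     subspace V \<and> closure V = UNIV \<and>
     (\<forall>l\<in>S. bounded_linear l) \<and>
     (\<forall>x\<in>V. (\<forall>l\<in>S. l x = 0) \<longrightarrow> x = 0) \<and>
     e \<in> real_cone S V \<and>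
     (\<forall>h\<in>V. \<exists>lam\<ge>0. lam *\<^sub>R e - h \<in> real_cone S V) \<and>
     (\<forall>h\<in>V. norm h = order_unit_norm S e h) \<and>
     (\<exists>m \<kappa>. m \<in> S_star S \<and> 0 < \<kappa> \<and> \<kappa> < 1 \<and> m e = 1 \<and>
        (\<forall>h\<in>real_cone S UNIV. m h \<ge> \<kappa> * norm h))"

definition cscale :: "complex \<Rightarrow> 'a::real_vector \<times> 'a \<Rightarrow> 'a \<times> 'a" where
  "cscale z p = (Re z *\<^sub>R fst p - Im z *\<^sub>R snd p, Re z *\<^sub>R snd p + Im z *\<^sub>R fst p)"

definition cnorm :: "'a::real_normed_vector \<times> 'a \<Rightarrow> real" where
  "cnorm p = (SUP \<theta>. sqrt ((norm (cos \<theta> *\<^sub>R fst p - sin \<theta> *\<^sub>R snd p))\<^sup>2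
                      + (norm (sin \<theta> *\<^sub>R fst p + cos \<theta> *\<^sub>R snd p))\<^sup>2))"

text \<open>Complex-linear continuous functionals on B_C correspond exactly to real-linear
  bounded maps L : B_R \<Rightarrow> complex, acting by (x,y) \<mapsto> L x + i L y
  (this is also the complex-linear extension of a real functional).\<close>
definition capply :: "('a \<Rightarrow> complex) \<Rightarrow> 'a \<times> 'a \<Rightarrow> complex" where
  "capply L p = L (fst p) + \<i> * L (snd p)"

definition complex_cone :: "('a::real_normed_vector \<Rightarrow> real) set \<Rightarrow> ('a \<times> 'a) set" where
  "complex_cone S = {cscale z (x, y) | z x y. z \<noteq> 0 \<and> x \<in> real_cone S UNIV \<and> y \<in> real_cone S UNIV}"

definition complex_dual_cone :: "('a::real_normed_vector \<Rightarrow> real) set \<Rightarrow> ('a \<Rightarrow> complex) set" where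
  "complex_dual_cone S = {L. bounded_linear L \<and> (\<forall>h\<in>complex_cone S. capply L h \<noteq> 0)}"

definition Eset :: "('a::real_normed_vector \<Rightarrow> real) set \<Rightarrow> 'a \<times> 'a \<Rightarrow> 'a \<times> 'a \<Rightarrow> complex set" where
  "Eset S h g = {capply L h / capply L g | L. L \<in> complex_dual_cone S}"

text \<open>Hilbert-type distance; value \<infinity> when the ratio sup/inf is not a finite
  positive real (sup infinite, inf zero, or E empty).\<close>
definition delta_C :: "('a::real_normed_vector \<Rightarrow> real) set \<Rightarrow> 'a \<times> 'a \<Rightarrow> 'a \<times> 'a \<Rightarrow> ereal" where
  "delta_C S h g =
    (let A = cmod ` Eset S h g in
     if A \<noteq> {} \<and> bdd_above A \<and> Inf A > 0 then ereal (ln (Sup A / Inf A)) else \<infinity>)"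

end

theory Submission
  imports Defs
begin

lemma cs_facts:
  assumes "cone_setting V S e"
  shows "e \<in> V" "e \<noteq> 0" "\<And>l. l \<in> S \<Longrightarrow> l e \<ge> 0" "\<And>l. l \<in> S \<Longrightarrow> bounded_linear l"
    "\<And>x. x \<in> V \<Longrightarrow> (\<forall>l\<in>S. l x = 0) \<Longrightarrow> x = 0"
    "\<And>u. u \<in> V \<Longrightarrow> norm u = order_unit_norm S e u"
    "\<And>u. u \<in> V \<Longrightarrow> \<exists>lam\<ge>0. lam *\<^sub>R e - u \<in> real_cone S V"
    "subspace V" "closure V = UNIV"
  using assms by (auto simp: cone_setting_def real_cone_def)

lemma bl_simps:
  assumes "bounded_linear f"
  shows "f (x + y) = f x + f y" "f (x - y) = f x - f y" "f (a *\<^sub>R x) = a *\<^sub>R f x" "f 0 = 0" "f (- x) = - f x"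
  using assms[THEN bounded_linear.linear]
  by (auto simp: linear_add linear_diff linear_scale linear_0 linear_neg)

lemma norm_e_ge1:
  assumes cs: "cone_setting V S e" shows "norm e \<ge> 1"
proof -
  note f = cs_facts[OF cs]
  obtain l0 where l0: "l0 \<in> S" "l0 e \<noteq> 0" using f(1,2,5) by blast
  hence pos: "l0 e > 0" using f(3)[of l0] by force
  let ?X = "{lam. lam \<ge> 0 \<and> (\<forall>l\<in>S. l (lam *\<^sub>R e + e) \<ge> 0 \<and> l (lam *\<^sub>R e - e) \<ge> 0)}"
  have lin: "l (a *\<^sub>R e + e) = (a+1) * l e" "l (a *\<^sub>R e - e) = (a - 1) * l e" if "l \<in> S" for l a
    using f(4)[OF that] by (auto simp: bl_simps algebra_simps)
  have "l (1 *\<^sub>R e + e) \<ge> 0 \<and> l (1 *\<^sub>R e - e) \<ge> 0" if "l \<in> S" for l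
    using f(3)[OF that] by (simp only: lin[OF that]) simp
  hence "1 \<in> ?X" by auto
  hence ne: "?X \<noteq> {}" by blast
  have "norm e = Inf ?X" using f(6)[OF f(1)] by (simp add: order_unit_norm_def)
  also have "1 \<le> Inf ?X"
  proof (rule cInf_greatest[OF ne])
    fix x assume "x \<in> ?X"
    hence "(x - 1) * l0 e \<ge> 0" using lin[OF l0(1)] l0(1) by auto
    thus "1 \<le> x" using pos by (simp add: zero_le_mult_iff)
  qed
  finally show ?thesis .
qed

lemma cone_V:
  assumes cs: "cone_setting V S e" and uV: "u \<in> V" and u1: "norm u < 1" and l: "l \<in> S"
  shows "l (e + u) \<ge> 0"
proof -
  note f = cs_facts[OF cs]
  let ?X = "{lam. lam \<ge> 0 \<and> (\<forall>l\<in>S. l (lam *\<^sub>R e + u) \<ge> 0 \<and> l (lam *\<^sub>R e - u) \<ge> 0)}"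
  have lin: "l (a *\<^sub>R e + u) = a * l e + l u" "l (a *\<^sub>R e - u) = a * l e - l u" if "l \<in> S" for l a
    using f(4)[OF that] by (auto simp: bl_simps algebra_simps)
  obtain a where a: "a \<ge> 0" "a *\<^sub>R e - u \<in> real_cone S V" using f(7)[OF uV] by blast
  have muV: "-u \<in> V" using uV f(8) by (simp add: subspace_neg)
  obtain b where b: "b \<ge> 0" "b *\<^sub>R e - (-u) \<in> real_cone S V" using f(7)[OF muV] by blast
  have "max a b \<in> ?X"
  proof -
    have "l (max a b *\<^sub>R e + u) \<ge> 0 \<and> l (max a b *\<^sub>R e - u) \<ge> 0" if ll: "l \<in> S" for l
    proof -
      have 1: "a * l e - l u \<ge> 0" using a(2) ll lin(2)[OF ll, of a] by (auto simp: real_cone_def)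
      have 2: "b * l e + l u \<ge> 0" using b(2) ll lin(1)[OF ll, of b] by (auto simp: real_cone_def)
      have "a * l e \<le> max a b * l e" "b * l e \<le> max a b * l e"
        using f(3)[OF ll] by (auto intro: mult_right_mono)
      thus ?thesis using 1 2 lin[OF ll] by auto
    qed
    thus ?thesis using a b by auto
  qed
  hence ne: "?X \<noteq> {}" by blast
  have "Inf ?X < 1" using u1 f(6)[OF uV] by (simp add: order_unit_norm_def)
  then obtain x where x: "x \<in> ?X" "x < 1" using cInf_lessD[OF ne] by blast
  have "x * l e + l u \<ge> 0" using x l lin(1)[OF l] by auto
  moreover have "x * l e \<le> 1 * l e" using x f(3)[OF l] by (intro mult_right_mono) auto
  ultimately have "l e + l u \<ge> 0" by simp
  thus ?thesis using f(4)[OF l] by (simp add: bl_simps)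
qed

lemma cone_ball:
  assumes cs: "cone_setting V S e" and u1: "norm u < 1"
  shows "e + u \<in> real_cone S UNIV"
proof -
  note f = cs_facts[OF cs]
  have "l (e + u) \<ge> 0" if l: "l \<in> S" for l
  proof -
    have c1: "continuous_on UNIV l" by (rule linear_continuous_on[OF f(4)[OF l]])
    have c2: "continuous_on UNIV (\<lambda>v. l (e + v))"
      by (rule continuous_on_compose2[OF c1]) (auto intro: continuous_intros)
    have cl: "closed {v. 0 \<le> l (e + v)}"
      using c2 by (intro closed_Collect_le) (auto intro: continuous_intros)
    have "ball 0 1 \<inter> V \<subseteq> {v. 0 \<le> l (e + v)}" using cone_V[OF cs _ _ l] by auto
    hence "closure (ball 0 1 \<inter> V) \<subseteq> {v. 0 \<le> l (e + v)}" using cl by (rule closure_minimal)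
    moreover have "ball 0 1 \<inter> closure V \<subseteq> closure (ball 0 1 \<inter> V)"
      by (rule open_Int_closure_subset) simp
    ultimately show ?thesis using u1 f(9) by auto
  qed
  moreover have "e + u \<noteq> 0"
  proof
    assume "e + u = 0" hence "u = - e" by (simp add: add_eq_0_iff2)
    thus False using u1 norm_e_ge1[OF cs] by simp
  qed
  ultimately show ?thesis by (auto simp: real_cone_def)
qed


lemma cscale_bound:
  fixes h :: "'a::real_normed_vector \<times> 'a"
  shows "norm (fst (cscale z h)) + norm (snd (cscale z h)) \<le> cmod z * sqrt 2 * cnorm h"
proof -
  obtain h1 h2 where hh: "h = (h1, h2)" by (cases h)
  define r where "r = cmod z"
  define p where "p = Arg z"
  have zr: "Re z = r * cos p" "Im z = r * sin p"
    using Re_rcis[of r p] Im_rcis[of r p] rcis_cmod_Arg[of z] by (simp_all add: r_def p_def)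
  define f where "f = (\<lambda>\<theta>. sqrt ((norm (cos \<theta> *\<^sub>R h1 - sin \<theta> *\<^sub>R h2))\<^sup>2
                      + (norm (sin \<theta> *\<^sub>R h1 + cos \<theta> *\<^sub>R h2))\<^sup>2))"
  have cn: "cnorm h = (SUP \<theta>. f \<theta>)" by (simp add: cnorm_def hh f_def)
  define a where "a = norm (cos p *\<^sub>R h1 - sin p *\<^sub>R h2)"
  define b where "b = norm (sin p *\<^sub>R h1 + cos p *\<^sub>R h2)"
  have hfst: "fst (cscale z h) = r *\<^sub>R (cos p *\<^sub>R h1 - sin p *\<^sub>R h2)"
    by (simp add: cscale_def hh zr algebra_simps)
  have hsnd: "snd (cscale z h) = r *\<^sub>R (sin p *\<^sub>R h1 + cos p *\<^sub>R h2)"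
    by (simp add: cscale_def hh zr algebra_simps)
  have r0: "r \<ge> 0" by (simp add: r_def)
  have lhs: "norm (fst (cscale z h)) + norm (snd (cscale z h)) = r * (a + b)"
    unfolding hfst hsnd norm_scaleR using r0 by (simp add: a_def b_def distrib_left)
  have bnd: "f \<theta> \<le> sqrt (2 * (norm h1 + norm h2)\<^sup>2)" for \<theta>
  proof -
    have n1: "norm (cos \<theta> *\<^sub>R h1 - sin \<theta> *\<^sub>R h2) \<le> norm h1 + norm h2"
    proof -
      have "norm (cos \<theta> *\<^sub>R h1 - sin \<theta> *\<^sub>R h2) \<le> \<bar>cos \<theta>\<bar> * norm h1 + \<bar>sin \<theta>\<bar> * norm h2"
        by (metis norm_scaleR norm_triangle_ineq4)
      also have "\<dots> \<le> norm h1 + norm h2"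
        by (intro add_mono mult_left_le_one_le) auto
      finally show ?thesis .
    qed
    have n2: "norm (sin \<theta> *\<^sub>R h1 + cos \<theta> *\<^sub>R h2) \<le> norm h1 + norm h2"
    proof -
      have "norm (sin \<theta> *\<^sub>R h1 + cos \<theta> *\<^sub>R h2) \<le> \<bar>sin \<theta>\<bar> * norm h1 + \<bar>cos \<theta>\<bar> * norm h2"
        by (metis norm_scaleR norm_triangle_ineq)
      also have "\<dots> \<le> norm h1 + norm h2"
        by (intro add_mono mult_left_le_one_le) auto
      finally show ?thesis .
    qed
    show ?thesis unfolding f_def
      by (intro real_sqrt_le_mono) (smt (verit) n1 n2 norm_ge_zero power_mono)
  qed
  have bdd: "bdd_above (range f)" using bnd by (intro bdd_aboveI2) auto
  have "f p \<le> cnorm h" unfolding cn by (rule cSUP_upper[OF _ bdd]) simp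
  hence ab: "sqrt (a\<^sup>2 + b\<^sup>2) \<le> cnorm h" by (simp add: f_def a_def b_def)
  have "a + b \<le> sqrt 2 * sqrt (a\<^sup>2 + b\<^sup>2)"
  proof -
    have a0: "a \<ge> 0" "b \<ge> 0" by (simp_all add: a_def b_def)
    have "a + b = sqrt ((a + b)\<^sup>2)" using a0 by simp
    also have "\<dots> \<le> sqrt (2 * (a\<^sup>2 + b\<^sup>2))"
      by (intro real_sqrt_le_mono) (smt (verit) sum_squares_ge_zero power2_eq_square sum_power2_ge_zero power2_sum real_sqrt_pow2 zero_le_power2 power2_diff)
    finally show ?thesis by (metis real_sqrt_mult)
  qed
  also have "\<dots> \<le> sqrt 2 * cnorm h" using ab by simp
  finally have "r * (a + b) \<le> r * (sqrt 2 * cnorm h)" using r0 by (intro mult_left_mono)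
  thus ?thesis using lhs by (simp add: r_def mult.assoc)
qed

lemma in_cone:
  assumes cs: "cone_setting V S e" and w: "norm (fst w) + norm (snd w) < 1"
  shows "(e, 0) + w \<in> complex_cone S"
proof -
  obtain p q where pq: "w = (p, q)" by (cases w)
  have x: "e + (p - q) \<in> real_cone S UNIV"
    by (rule cone_ball[OF cs]) (smt (verit) w pq norm_triangle_ineq4 fst_conv snd_conv)
  have y: "e + (p + q) \<in> real_cone S UNIV"
    by (rule cone_ball[OF cs]) (smt (verit) w pq norm_triangle_ineq fst_conv snd_conv)
  have eq: "(e, 0) + w = cscale (Complex (1/2) (-1/2)) (e + (p - q), e + (p + q))"
    by (simp add: pq cscale_def algebra_simps scaleR_2[symmetric] flip: scaleR_add_left)
  have "Complex (1/2) (-1/2) \<noteq> 0" by (simp add: complex_eq_iff)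
  thus ?thesis unfolding complex_cone_def eq using x y by blast
qed


lemma cscale_mult: "cscale (c * d) p = cscale c (cscale d p)"
  by (simp add: cscale_def algebra_simps)

lemma capply_add:
  assumes "bounded_linear L" shows "capply L (p + q) = capply L p + capply L q"
  using bl_simps[OF assms] by (simp add: capply_def algebra_simps)

lemma capply_cscale:
  assumes "bounded_linear L" shows "capply L (cscale c p) = c * capply L p"
proof -
  have c: "c = of_real (Re c) + \<i> * of_real (Im c)" by (simp add: complex_eq_iff)
  show ?thesis
    by (simp add: capply_def cscale_def bl_simps[OF assms] scaleR_conv_of_real complex_eq_iff algebra_simps)
qed

lemma capply_e: "capply L (e, 0) = L e - \<i> * 0 + \<i> * L 0"
  by (simp add: capply_def)

theorem lemma5p13:
  fixes V :: "'a::banach set" and S :: "('a \<Rightarrow> real) set" and e :: 'a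
    and h :: "'a \<times> 'a" and z :: complex
  assumes "cone_setting V S e"
    and "cmod z * sqrt 2 * cnorm h < 1"
  shows "(e, 0) + cscale z h \<in> complex_cone S
    \<and> delta_C S (e, 0) ((e, 0) + cscale z h)
        \<le> ereal (ln ((1 + cmod z * sqrt 2 * cnorm h) / (1 - cmod z * sqrt 2 * cnorm h)))
    \<and> delta_C S (e, 0) ((e, 0) + cscale z h) < \<infinity>"
proof -
  note cs = assms(1)
  define t where "t = cmod z * sqrt 2 * cnorm h"
  have t1: "t < 1" using assms(2) by (simp add: t_def)
  have "0 \<le> cmod 1 * sqrt 2 * cnorm h" by (rule order_trans[OF _ cscale_bound[of 1 h]]) simp
  hence cn0: "cnorm h \<ge> 0" by (simp add: zero_le_mult_iff)
  have t0: "t \<ge> 0" using cn0 by (simp add: t_def)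
  have part1: "(e, 0) + cscale z' h \<in> complex_cone S" if "cmod z' * sqrt 2 * cnorm h < 1" for z'
    using in_cone[OF cs] cscale_bound[of z' h] that by (meson le_less_trans)
  have key: "cmod (capply L (cscale z h)) \<le> t * cmod (L e) \<and> L e \<noteq> 0"
    if L: "L \<in> complex_dual_cone S" for L
  proof -
    have bl: "bounded_linear L" and nz: "\<And>w. w \<in> complex_cone S \<Longrightarrow> capply L w \<noteq> 0"
      using L by (auto simp: complex_dual_cone_def)
    have L0: "L 0 = 0" using bl_simps[OF bl] by simp
    have cLe: "capply L (e, 0) = L e" by (simp add: capply_def L0)
    have "(e, 0) + cscale 0 h \<in> complex_cone S" using part1[of 0] by simp
    hence "(e, 0) \<in> complex_cone S" by (simp add: cscale_def)
    hence Le: "L e \<noteq> 0" using nz cLe by metis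
    have "cmod (capply L (cscale z h)) \<le> t * cmod (L e)"
    proof (rule ccontr)
      assume "\<not> ?thesis"
      hence gt: "cmod (capply L (cscale z h)) > t * cmod (L e)" by simp
      moreover have "t * cmod (L e) \<ge> 0" using t0 by simp
      ultimately have nz2: "capply L (cscale z h) \<noteq> 0" by auto
      define c where "c = - L e / capply L (cscale z h)"
      have "cmod (c * z) * sqrt 2 * cnorm h = cmod (L e) * t / cmod (capply L (cscale z h))"
        by (simp add: c_def t_def norm_mult norm_divide)
      also have "\<dots> < 1" using gt nz2 by (simp add: divide_less_eq mult.commute)
      finally have "(e, 0) + cscale (c * z) h \<in> complex_cone S" by (rule part1)
      hence "capply L ((e, 0) + cscale (c * z) h) \<noteq> 0" by (rule nz)
      moreover have "capply L ((e, 0) + cscale (c * z) h) = 0"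
        using nz2 by (simp add: capply_add[OF bl] cscale_mult capply_cscale[OF bl] cLe c_def)
      ultimately show False by simp
    qed
    thus ?thesis using Le by simp
  qed
  define A where "A = cmod ` Eset S (e, 0) ((e, 0) + cscale z h)"
  have Abnd: "1 / (1 + t) \<le> x \<and> x \<le> 1 / (1 - t)" if xA: "x \<in> A" for x
  proof -
    obtain L where L: "L \<in> complex_dual_cone S"
      and x: "x = cmod (capply L (e, 0) / capply L ((e, 0) + cscale z h))"
      using xA by (auto simp: A_def Eset_def)
    have bl: "bounded_linear L" using L by (auto simp: complex_dual_cone_def)
    have L0: "L 0 = 0" using bl_simps[OF bl] by simp
    define a where "a = cmod (L e)"
    define b where "b = cmod (capply L (cscale z h))"
    define d where "d = cmod (L e + capply L (cscale z h))"
    have ce: "capply L (e, 0) = L e" by (simp add: capply_def L0)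
    have cs2: "capply L ((e, 0) + cscale z h) = L e + capply L (cscale z h)"
      by (simp only: capply_add[OF bl] ce)
    have x2: "x = a / d" unfolding x cs2 ce a_def d_def by (simp add: norm_divide)
    have a0: "a > 0" and bt: "b \<le> t * a" using key[OF L] by (auto simp: a_def b_def)
    have d1: "d \<le> a + b" unfolding d_def a_def b_def by (rule norm_triangle_ineq)
    have d2: "d \<ge> a - b" unfolding d_def a_def b_def by (rule norm_diff_ineq)
    have dlo: "d \<ge> (1 - t) * a" using d2 bt by (simp add: algebra_simps)
    have dhi: "d \<le> (1 + t) * a" using d1 bt by (simp add: algebra_simps)
    have "(1 - t) * a > 0" using a0 t1 by simp
    hence dpos: "d > 0" using dlo by linarith
    have e1: "1 / (1 + t) = a / ((1 + t) * a)" using a0 t0 by simp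
    have e2: "1 / (1 - t) = a / ((1 - t) * a)" using a0 t1 by simp
    have "a / ((1 + t) * a) \<le> a / d" using dhi a0 dpos t0 by (intro divide_left_mono) auto
    moreover have "a / d \<le> a / ((1 - t) * a)" using dlo a0 dpos t1 by (intro divide_left_mono) auto
    ultimately have "1 / (1 + t) \<le> a / d" "a / d \<le> 1 / (1 - t)" using e1 e2 by simp_all
    thus ?thesis using x2 by simp
  qed
  obtain m \<kappa> where m: "m \<in> S_star S" "0 < \<kappa>" "\<forall>x\<in>real_cone S UNIV. m x \<ge> \<kappa> * norm x"
  proof -
    have "\<exists>m \<kappa>. m \<in> S_star S \<and> 0 < \<kappa> \<and> \<kappa> < 1 \<and> m e = 1 \<and>
        (\<forall>h\<in>real_cone S UNIV. m h \<ge> \<kappa> * norm h)"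
      using cs by (simp only: cone_setting_def)
    thus ?thesis using that by blast
  qed
  have mbl: "bounded_linear m" using m(1) by (simp add: S_star_def)
  define L0 where "L0 = (\<lambda>x. complex_of_real (m x))"
  have L0bl: "bounded_linear L0" unfolding L0_def
    using bounded_linear_compose[OF bounded_linear_of_real mbl] by (simp add: o_def)
  have "L0 \<in> complex_dual_cone S"
  proof -
    have "capply L0 w \<noteq> 0" if wC: "w \<in> complex_cone S" for w
    proof -
      obtain c x y where w: "w = cscale c (x, y)" "c \<noteq> 0" "x \<in> real_cone S UNIV" "y \<in> real_cone S UNIV"
        using wC by (auto simp: complex_cone_def)
      have "m x \<ge> \<kappa> * norm x" using m(3) w(3) by blast
      moreover have "norm x > 0" using w(3) by (simp add: real_cone_def)
      moreover have "\<kappa> * norm x > 0" using m(2) calculation(2) by simp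
      ultimately have mx: "m x > 0" by linarith
      have "capply L0 (x, y) \<noteq> 0"
      proof
        assume "capply L0 (x, y) = 0"
        hence "Re (capply L0 (x, y)) = 0" by simp
        thus False using mx by (simp add: capply_def L0_def)
      qed
      thus ?thesis using w(1,2) by (simp add: capply_cscale[OF L0bl])
    qed
    thus ?thesis using L0bl by (simp add: complex_dual_cone_def)
  qed
  hence Ane: "A \<noteq> {}" by (auto simp: A_def Eset_def)
  have bddA: "bdd_above A" using Abnd by (intro bdd_aboveI) auto
  have bddbA: "bdd_below A" using Abnd by (intro bdd_belowI) auto
  have infA: "Inf A \<ge> 1 / (1 + t)" using Abnd by (intro cInf_greatest[OF Ane]) auto
  have supA: "Sup A \<le> 1 / (1 - t)" using Abnd by (intro cSup_least[OF Ane]) auto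
  have "1 / (1 + t) > 0" using t0 by simp
  hence ipos: "Inf A > 0" using infA by linarith
  have si: "Inf A \<le> Sup A" by (rule cInf_le_cSup[OF Ane bddA bddbA])
  have dC: "delta_C S (e, 0) ((e, 0) + cscale z h) = ereal (ln (Sup A / Inf A))"
    using Ane bddA ipos unfolding delta_C_def A_def[symmetric] by (simp add: Let_def)
  have "Sup A / Inf A \<le> (1 / (1 - t)) / (1 / (1 + t))"
    using supA infA ipos si t0 t1 by (intro frac_le) auto
  also have "\<dots> = (1 + t) / (1 - t)" using t0 t1 by (simp add: divide_simps)
  finally have q: "Sup A / Inf A \<le> (1 + t) / (1 - t)" .
  have "ln (Sup A / Inf A) \<le> ln ((1 + t) / (1 - t))"
    using q ipos si by (intro ln_mono) auto
  hence "delta_C S (e, 0) ((e, 0) + cscale z h) \<le> ereal (ln ((1 + t) / (1 - t)))"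
    using dC by simp
  moreover have "(e, 0) + cscale z h \<in> complex_cone S" using part1 assms(2) by blast
  ultimately show ?thesis using dC by (simp add: t_def)
qed

end
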